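(* For $\Re(s)>1$, $$\zeta\big(\mathbb{Z}[X]/(X^2),s\big)=\zeta(s)\,\zeta(2s-1),$$ where $\zeta$ is the Riemann zeta function; in particular this function has a double pole at $s=1$.
   Context: For a commutative ring $R$ with identity in which the number $a_n(R)$ of ideals of index $n$ is finite for every $n\in\mathbb{N}$, $\zeta(R,s)=\sum_{n\ge1}a_n(R)n^{-s}$. *)

theory Defs
  imports "HOL-Analysis.Analysis" "HOL-Algebra.QuotRing"
begin

text \<open>The ring Z[X]/(X^2), realised concretely as pairs (a,b) standing for the
  residue class of a + b X; multiplication uses X^2 = 0.\<close>
definition ZX_mod_X2 :: "(int \<times> int) ring" where
  "ZX_mod_X2 = \<lparr> carrier = UNIV,
     monoid.mult = (\<lambda>(a, b) (c, d). (a * c, a * d + b * c)),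
     one = (1, 0),
     zero = (0, 0),
     add = (\<lambda>(a, b) (c, d). (a + c, b + d)) \<rparr>"

definition num_ideals_of_index :: "('a, 'b) ring_scheme \<Rightarrow> nat \<Rightarrow> nat" where
  "num_ideals_of_index R n = card {I. ideal I R \<and> card (carrier (R Quot I)) = n}"

definition riemann_zeta :: "complex \<Rightarrow> complex" where
  "riemann_zeta s = (\<Sum>n. 1 / (of_nat (Suc n)) powr s)"

end

theory Submission
  imports Defs
begin


abbreviation "RR \<equiv> ZX_mod_X2"

lemma R_carrier[simp]: "carrier RR = UNIV" by (simp add: ZX_mod_X2_def)
lemma R_add[simp]: "x \<oplus>\<^bsub>RR\<^esub> y = x + y"
  by (cases x; cases y) (simp add: ZX_mod_X2_def)
lemma R_mult[simp]: "x \<otimes>\<^bsub>RR\<^esub> y = (fst x * fst y, fst x * snd y + snd x * fst y)"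
  by (cases x; cases y) (simp add: ZX_mod_X2_def)
lemma R_zero[simp]: "\<zero>\<^bsub>RR\<^esub> = 0" by (simp add: ZX_mod_X2_def zero_prod_def)
lemma R_one[simp]: "\<one>\<^bsub>RR\<^esub> = (1,0)" by (simp add: ZX_mod_X2_def)

lemma R_cring: "cring RR"
proof (rule cringI)
  show "abelian_group RR"
  proof (rule abelian_groupI)
    fix x :: "int \<times> int"
    show "\<exists>y\<in>carrier RR. y \<oplus>\<^bsub>RR\<^esub> x = \<zero>\<^bsub>RR\<^esub>"
      by (rule bexI[of _ "-x"]) auto
  qed (auto simp: algebra_simps)
  show "comm_monoid RR"
    by (rule comm_monoidI) (auto simp: algebra_simps)
  show "\<And>x y z. (x \<oplus>\<^bsub>RR\<^esub> y) \<otimes>\<^bsub>RR\<^esub> z = x \<otimes>\<^bsub>RR\<^esub> z \<oplus>\<^bsub>RR\<^esub> y \<otimes>\<^bsub>RR\<^esub> z"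
    by (auto simp: algebra_simps)
qed

lemma R_ring: "ring RR" using R_cring cring.axioms(1) by blast

lemma R_a_inv[simp]: "\<ominus>\<^bsub>RR\<^esub> x = - x"
proof -
  interpret ring RR by (rule R_ring)
  show ?thesis by (rule minus_equality) auto
qed

lemma R_coset: "I +>\<^bsub>RR\<^esub> x = (\<lambda>h. h + x) ` I"
  by (auto simp: a_r_coset_def r_coset_def)

lemma R_Quot_carrier: "carrier (RR Quot I) = range (\<lambda>x. (\<lambda>h. h + x) ` I)"
proof -
  interpret ring RR by (rule R_ring)
  have "carrier (RR Quot I) = a_rcosets\<^bsub>RR\<^esub> I" by (simp add: FactRing_def)
  also have "\<dots> = (\<Union>a\<in>carrier RR. {I +>\<^bsub>RR\<^esub> a})" by (simp add: A_RCOSETS_def')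
  finally show ?thesis by (auto simp: R_coset)
qed



definition LL :: "nat \<Rightarrow> nat \<Rightarrow> nat \<Rightarrow> (int \<times> int) set" where
  "LL k j t = {(a,b). int (j*k) dvd a \<and> int k dvd (b - (a div int (j*k)) * int t)}"

lemma coset_eq_iff:
  fixes I :: "(int\<times>int) set"
  assumes add: "\<And>x y. x \<in> I \<Longrightarrow> y \<in> I \<Longrightarrow> x + y \<in> I"
    and neg: "\<And>x. x \<in> I \<Longrightarrow> -x \<in> I" and z: "0 \<in> I"
  shows "(\<lambda>h. h + x) ` I = (\<lambda>h. h + y) ` I \<longleftrightarrow> x - y \<in> I"
proof
  assume "(\<lambda>h. h + x) ` I = (\<lambda>h. h + y) ` I"
  then have "0 + x \<in> (\<lambda>h. h + y) ` I" using z by blast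
  then obtain h where "h \<in> I" "x = h + y" by auto
  then show "x - y \<in> I" by simp
next
  assume xy: "x - y \<in> I"
  have yx: "y - x \<in> I" using neg[OF xy] by simp
  show "(\<lambda>h. h + x) ` I = (\<lambda>h. h + y) ` I"
  proof (intro equalityI subsetI)
    fix u assume "u \<in> (\<lambda>h. h + x) ` I"
    then obtain h where h: "h \<in> I" "u = h + x" by auto
    have "h + (x - y) \<in> I" using add[OF h(1) xy] .
    moreover have "u = (h + (x - y)) + y" using h by simp
    ultimately show "u \<in> (\<lambda>h. h + y) ` I" by blast
  next
    fix u assume "u \<in> (\<lambda>h. h + y) ` I"
    then obtain h where h: "h \<in> I" "u = h + y" by auto
    have "h + (y - x) \<in> I" using add[OF h(1) yx] .
    moreover have "u = (h + (y - x)) + x" using h by simp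
    ultimately show "u \<in> (\<lambda>h. h + x) ` I" by blast
  qed
qed

lemma LL_mem: "(a,b) \<in> LL k j t \<longleftrightarrow> int (j*k) dvd a \<and> int k dvd (b - (a div int (j*k)) * int t)"
  by (simp add: LL_def)

lemma LL_add:
  assumes kj: "k > 0" "j > 0" and "x \<in> LL k j t" "y \<in> LL k j t" shows "x + y \<in> LL k j t"
proof -
  obtain a b c e where xy: "x = (a,b)" "y = (c,e)" by (cases x, cases y)
  define M where "M = int j * int k"
  have M0: "M \<noteq> 0" using kj by (simp add: M_def)
  from assms obtain p q where pq: "a = M * p" "c = M * q"
    by (auto simp: xy LL_mem M_def elim!: dvdE)
  have d: "(a + c) div M = p + q" "a div M = p" "c div M = q" using M0 pq by (simp_all add: distrib_left[symmetric])
  have 1: "int k dvd b - p * int t" "int k dvd e - q * int t" using assms d by (auto simp: xy LL_mem M_def[symmetric])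
  have "int k dvd (b - p * int t) + (e - q * int t)" using 1 by (rule dvd_add)
  then have "int k dvd (b + e) - (p + q) * int t" by (simp add: algebra_simps)
  moreover have "M dvd a + c" using pq by simp
  ultimately show ?thesis using d by (simp add: xy LL_mem M_def[symmetric])
qed

lemma LL_smul:
  assumes kj: "k > 0" "j > 0" and "x \<in> LL k j t" shows "(c * fst x, c * snd x + e * fst x) \<in> LL k j t"
proof -
  obtain a b where xy: "x = (a,b)" by (cases x)
  define M where "M = int j * int k"
  have M0: "M \<noteq> 0" using kj by (simp add: M_def)
  from assms obtain p where p: "a = M * p"
    by (auto simp: xy LL_mem M_def elim!: dvdE)
  have d: "(c * a) div M = c * p" "a div M = p" using M0 p by simp_all
  have 1: "int k dvd b - p * int t" using assms d by (auto simp: xy LL_mem M_def[symmetric])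
  have ka: "int k dvd a" using p by (simp add: M_def)
  have "int k dvd c * (b - p * int t) + e * a" using 1 ka by simp
  then have "int k dvd (c * b + e * a) - (c * p) * int t" by (simp add: algebra_simps)
  moreover have "M dvd c * a" using p by simp
  ultimately show ?thesis using d by (simp add: xy LL_mem M_def[symmetric])
qed

lemma LL_ideal:
  assumes kj: "k > 0" "j > 0" shows "ideal (LL k j t) RR"
proof (rule idealI[OF R_ring])
  show "subgroup (LL k j t) (add_monoid RR)"
  proof (rule subgroup.intro)
    show "LL k j t \<subseteq> carrier (add_monoid RR)" by simp
    show "\<And>x y. x \<in> LL k j t \<Longrightarrow> y \<in> LL k j t \<Longrightarrow> x \<otimes>\<^bsub>add_monoid RR\<^esub> y \<in> LL k j t"
      using LL_add[OF kj] by simp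
    show "\<one>\<^bsub>add_monoid RR\<^esub> \<in> LL k j t" by (simp add: LL_def zero_prod_def)
    show "\<And>x. x \<in> LL k j t \<Longrightarrow> inv\<^bsub>add_monoid RR\<^esub> x \<in> LL k j t"
    proof -
      fix x assume "x \<in> LL k j t"
      from LL_smul[OF kj this, of "-1" 0] have "- x \<in> LL k j t" by (cases x) simp
      then show "inv\<^bsub>add_monoid RR\<^esub> x \<in> LL k j t" using R_a_inv[of x] by (simp add: a_inv_def)
    qed
  qed
  show "\<And>a x. a \<in> LL k j t \<Longrightarrow> x \<in> carrier RR \<Longrightarrow> x \<otimes>\<^bsub>RR\<^esub> a \<in> LL k j t"
    using LL_smul[OF kj] by (auto simp: mult.commute)
  show "\<And>a x. a \<in> LL k j t \<Longrightarrow> x \<in> carrier RR \<Longrightarrow> a \<otimes>\<^bsub>RR\<^esub> x \<in> LL k j t"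
    using LL_smul[OF kj] by (auto simp: mult.commute add.commute)
qed

lemma LL_closed:
  assumes kj: "k > 0" "j > 0"
  shows "\<And>x y. x \<in> LL k j t \<Longrightarrow> y \<in> LL k j t \<Longrightarrow> x + y \<in> LL k j t"
    "\<And>x. x \<in> LL k j t \<Longrightarrow> -x \<in> LL k j t" "0 \<in> LL k j t"
proof -
  show "\<And>x y. x \<in> LL k j t \<Longrightarrow> y \<in> LL k j t \<Longrightarrow> x + y \<in> LL k j t" using LL_add[OF kj] .
  show "\<And>x. x \<in> LL k j t \<Longrightarrow> -x \<in> LL k j t"
    subgoal for x using LL_smul[OF kj, where x=x and c="-1" and e=0] by (cases x) simp .
  show "0 \<in> LL k j t" by (simp add: LL_def zero_prod_def)
qed

lemma LL_card:
  assumes kj: "k > 0" "j > 0"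
  shows "card (carrier (RR Quot LL k j t)) = j * k * k"
proof -
  define L where "L = LL k j t"
  define M where "M = int j * int k"
  define K where "K = int k"
  have M0: "M > 0" "K > 0" using kj by (simp_all add: M_def K_def)
  define f where "f p = (\<lambda>h. h + p) ` L" for p :: "int \<times> int"
  define P where "P = {0..<M} \<times> {0..<K}"
  have feq: "f x = f y \<longleftrightarrow> x - y \<in> L" for x y
    unfolding f_def L_def by (rule coset_eq_iff) (use LL_closed[OF kj] in auto)
  have memL: "(a,b) \<in> L \<longleftrightarrow> M dvd a \<and> K dvd (b - (a div M) * int t)" for a b
    by (simp add: L_def LL_mem M_def K_def)
  have inj: "inj_on f P"
  proof (rule inj_onI)
    fix x y assume x: "x \<in> P" and y: "y \<in> P" and e: "f x = f y"
    obtain a b c d where xy: "x = (a,b)" "y = (c,d)" by (cases x, cases y)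
    have "(a - c, b - d) \<in> L" using e feq xy by simp
    then have 1: "M dvd a - c" "K dvd (b - d) - ((a - c) div M) * int t" by (auto simp: memL)
    have "a mod M = c mod M" using 1(1) by (simp add: mod_eq_dvd_iff)
    then have ac: "a = c" using x y xy by (simp add: P_def)
    then have "b mod K = d mod K" using 1(2) by (simp add: mod_eq_dvd_iff)
    then have "b = d" using x y xy by (simp add: P_def)
    then show "x = y" using ac xy by simp
  qed
  have img: "f ` P = range f"
  proof (intro equalityI subsetI)
    fix u assume "u \<in> range f"
    then obtain x where u: "u = f x" by auto
    obtain a b where x: "x = (a,b)" by (cases x)
    define q where "q = a div M"
    define p where "p = (a mod M, (b - q * int t) mod K)"
    have "p \<in> P" using M0 by (simp add: p_def P_def)
    moreover have "x - p \<in> L"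
    proof -
      have e1: "a - a mod M = M * q" by (simp add: q_def minus_mod_eq_mult_div)
      have e2: "b - (b - q * int t) mod K - q * int t = K * ((b - q * int t) div K)"
        using minus_mod_eq_mult_div[of "b - q * int t" K] by simp
      show ?thesis using e1 e2 M0 by (simp add: x p_def memL)
    qed
    ultimately show "u \<in> f ` P" using feq u by blast
  qed auto
  have "carrier (RR Quot L) = range f" by (simp add: R_Quot_carrier f_def)
  then have "card (carrier (RR Quot L)) = card P" using img inj card_image by metis
  also have "\<dots> = nat M * nat K" by (simp add: P_def card_cartesian_product)
  also have "\<dots> = j * k * k" by (simp add: M_def K_def nat_mult_distrib)
  finally show ?thesis by (simp add: L_def)
qed



lemma ideal_ops:
  assumes "ideal I RR"
  shows "\<And>x y. x \<in> I \<Longrightarrow> y \<in> I \<Longrightarrow> x + y \<in> I"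
    and "\<And>x c e. x \<in> I \<Longrightarrow> (c * fst x, c * snd x + e * fst x) \<in> I"
proof -
  interpret ideal I RR by fact
  show "\<And>x y. x \<in> I \<Longrightarrow> y \<in> I \<Longrightarrow> x + y \<in> I" 
  proof -
    fix x y assume "x \<in> I" "y \<in> I"
    have "additive_subgroup I RR" using assms ideal.axioms(1) by blast
    then have "x \<oplus>\<^bsub>RR\<^esub> y \<in> I" using additive_subgroup.a_closed \<open>x \<in> I\<close> \<open>y \<in> I\<close> by blast
    then show "x + y \<in> I" by simp
  qed
  show "\<And>x c e. x \<in> I \<Longrightarrow> (c * fst x, c * snd x + e * fst x) \<in> I"
    subgoal for x c e using I_l_closed[of x "(c,e)"] by (simp add: add.commute mult.commute) .
qed

lemma ideal_is_LL:
  assumes I: "ideal I RR" and fin: "finite (carrier (RR Quot I))"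
  shows "\<exists>k j t. k > 0 \<and> j > 0 \<and> t < k \<and> I = LL k j t"
proof -
  note add = ideal_ops(1)[OF I] and sm = ideal_ops(2)[OF I]
  have scal: "x \<in> I \<Longrightarrow> (c * fst x, c * snd x) \<in> I" for x c using sm[of x c 0] by simp
  have Xm: "x \<in> I \<Longrightarrow> (0, fst x) \<in> I" for x using sm[of x 0 1] by simp
  have neg: "x \<in> I \<Longrightarrow> -x \<in> I" for x using scal[of x "-1"] by (cases x) simp
  have diff: "x \<in> I \<Longrightarrow> y \<in> I \<Longrightarrow> x - y \<in> I" for x y using add[OF _ neg[of y]] by simp
  have zero: "0 \<in> I"
  proof -
    interpret ideal I RR by fact
    have "additive_subgroup I RR" using assms ideal.axioms(1) by blast
    then have "\<zero>\<^bsub>RR\<^esub> \<in> I" using additive_subgroup.zero_closed by blast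
    then show ?thesis by simp
  qed
  define f where "f i = (\<lambda>h. h + (int i, 0::int)) ` I" for i :: nat
  have "range f \<subseteq> carrier (RR Quot I)" by (auto simp: R_Quot_carrier f_def)
  then have "finite (range f)" using fin finite_subset by blast
  then have "\<not> inj f" using finite_imageD by blast
  then obtain i1 i2 where i12: "i1 \<noteq> i2" "f i1 = f i2" by (auto simp: inj_def)
  have "(int i1, 0) - (int i2, 0::int) \<in> I"
    using i12 coset_eq_iff[OF add neg zero] by (simp add: f_def)
  then have a0: "(int i1 - int i2, 0) \<in> I" by simp
  obtain a0' where a0': "a0' > 0" "(a0', 0) \<in> I"
  proof (cases "int i1 - int i2 > 0")
    case True then show ?thesis using that a0 by blast
  next
    case False
    then have "int i2 - int i1 > 0" using i12 by simp
    moreover have "(int i2 - int i1, 0) \<in> I" using neg[OF a0] by simp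
    ultimately show ?thesis using that by blast
  qed
  define Pd where "Pd n = (n > 0 \<and> (0, int n) \<in> I)" for n :: nat
  define Pm where "Pm n = (n > 0 \<and> (\<exists>b. (int n, b) \<in> I))" for n :: nat
  have "Pd (nat a0')" using Xm[OF a0'(2)] a0' by (simp add: Pd_def)
  then have Pd: "Pd (LEAST n. Pd n)" by (rule LeastI)
  have "Pm (nat a0')" using a0' by (auto simp: Pm_def)
  then have Pm: "Pm (LEAST n. Pm n)" by (rule LeastI)
  define d where "d = (LEAST n. Pd n)"
  define m where "m = (LEAST n. Pm n)"
  have d0: "d > 0" and dI: "(0, int d) \<in> I" using Pd by (auto simp: Pd_def d_def)
  have m0: "m > 0" using Pm by (auto simp: Pm_def m_def)
  obtain b0 where b0: "(int m, b0) \<in> I" using Pm by (auto simp: Pm_def m_def)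
  have dmin: "n < d \<Longrightarrow> \<not> Pd n" for n unfolding d_def by (rule not_less_Least)
  have mmin: "n < m \<Longrightarrow> \<not> Pm n" for n unfolding m_def by (rule not_less_Least)
  have dvd_d: "int d dvd b" if "(0, b) \<in> I" for b
  proof -
    have "(0, b) - (int d * (b div int d) * 0, (b div int d) * int d) \<in> I"
      using diff[OF that scal[OF dI, of "b div int d"]] by simp
    then have "(0, b mod int d) \<in> I" by (simp add: minus_div_mult_eq_mod)
    moreover have "b mod int d < int d" "b mod int d \<ge> 0" using d0 by simp_all
    ultimately have "b mod int d = 0" using dmin[of "nat (b mod int d)"] by (auto simp: Pd_def)
    then show ?thesis by presburger
  qed
  have dvd_m: "int m dvd a" if "(a, b) \<in> I" for a b
  proof -
    have "(a, b) - ((a div int m) * int m, (a div int m) * b0) \<in> I"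
      using diff[OF that scal[OF b0, of "a div int m"]] by (simp add: mult.commute)
    then have "(a mod int m, b - (a div int m) * b0) \<in> I" by (simp add: minus_div_mult_eq_mod)
    moreover have "a mod int m < int m" "a mod int m \<ge> 0" using m0 by simp_all
    moreover note mmin[of "nat (a mod int m)"]
    ultimately have "a mod int m = 0" unfolding Pm_def by (metis nat_0_le nat_less_iff of_nat_0_less_iff order_le_less)
    then show ?thesis by presburger
  qed
  have "int d dvd int m" using dvd_d[OF Xm[OF b0]] by simp
  then obtain j where j: "m = j * d" by (metis dvd_def mult.commute of_nat_dvd_iff)
  have j0: "j > 0" using j m0 by (cases j) auto
  define t where "t = nat (b0 mod int d)"
  have t: "t < d" using d0 by (simp add: t_def nat_less_iff)
  have mt: "(int m, int t) \<in> I"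
  proof -
    have "(int m, b0) - ((b0 div int d) * 0, (b0 div int d) * int d) \<in> I"
      using diff[OF b0 scal[OF dI, of "b0 div int d"]] by simp
    then show ?thesis using d0 by (simp add: t_def minus_div_mult_eq_mod)
  qed
  have "I = LL d j t"
  proof (intro equalityI subsetI)
    fix x assume x: "x \<in> I"
    obtain a b where ab: "x = (a,b)" by (cases x)
    have ma: "int m dvd a" using dvd_m x ab by blast
    define q where "q = a div int m"
    have "(a,b) - (q * int m, q * int t) \<in> I" using diff[of x, OF x scal[OF mt, of q]] ab by simp
    moreover have "a = q * int m" using ma by (simp add: q_def)
    ultimately have "(0, b - q * int t) \<in> I" by simp
    then have "int d dvd b - q * int t" using dvd_d by blast
    then show "x \<in> LL d j t" using ma by (simp add: ab LL_mem j q_def mult.commute)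
  next
    fix x assume x: "x \<in> LL d j t"
    obtain a b where ab: "x = (a,b)" by (cases x)
    define q where "q = a div int m"
    have 1: "int m dvd a" "int d dvd b - q * int t" using x by (simp_all add: ab LL_mem j q_def mult.commute)
    then obtain r where r: "b - q * int t = int d * r" by (auto elim: dvdE)
    have a: "a = q * int m" using 1 by (simp add: q_def)
    have "(q * int m, q * int t) + (r * 0, r * int d) \<in> I" using add[OF scal[OF mt] scal[OF dI]] by simp
    then show "x \<in> I" using a r by (simp add: ab algebra_simps)
  qed
  then show ?thesis using d0 j0 t by blast
qed

lemma LL_inj:
  assumes "k > 0" "j > 0" "t < k" "k' > 0" "j' > 0" "t' < k'" "LL k j t = LL k' j' t'"
  shows "k = k' \<and> j = j' \<and> t = t'"
proof -
  have m1: "(int (j*k), int t) \<in> LL k j t" using assms(1,2) by (simp add: LL_mem)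
  have m2: "(int (j'*k'), int t') \<in> LL k' j' t'" using assms(4,5) by (simp add: LL_mem)
  have d1: "(0, int k) \<in> LL k j t" by (simp add: LL_mem)
  have d2: "(0, int k') \<in> LL k' j' t'" by (simp add: LL_mem)
  have mk: "(int (j*k), int t) \<in> LL k' j' t'" using m1 assms(7) by simp
  then have "int (j'*k') dvd int (j*k)" unfolding LL_mem by blast
  moreover have "(int (j'*k'), int t') \<in> LL k j t" using m2 assms(7) by simp
  then have "int (j*k) dvd int (j'*k')" unfolding LL_mem by blast
  ultimately have "int (j'*k') dvd int (j*k)" "int (j*k) dvd int (j'*k')" by blast+
  then have jk: "j*k = j'*k'" by (metis int_dvd_int_iff dvd_antisym)
  have "(0, int k) \<in> LL k' j' t'" using d1 assms(7) by simp
  then have "int k' dvd int k" unfolding LL_mem by simp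
  moreover have "(0, int k') \<in> LL k j t" using d2 assms(7) by simp
  then have "int k dvd int k'" unfolding LL_mem by simp
  ultimately have "int k' dvd int k" "int k dvd int k'" by blast+
  then have kk: "k = k'" by (metis int_dvd_int_iff dvd_antisym)
  then have jj: "j = j'" using jk assms by simp
  have "(int (j*k), int t) \<in> LL k j t'" using mk kk jj by simp
  then have "int k dvd int t - int t'" using assms(1,2) unfolding LL_mem by simp
  then have "int t mod int k = int t' mod int k" by (simp add: mod_eq_dvd_iff)
  then have "t = t'" using assms kk by simp
  then show ?thesis using kk jj by simp
qed



definition BB :: "nat \<Rightarrow> (nat \<times> nat) set" where
  "BB n = {(k,j). Suc j * Suc k * Suc k = Suc n}"

lemma finite_BB: "finite (BB n)"
proof -
  have "BB n \<subseteq> {..n} \<times> {..n}"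
  proof
    fix p assume "p \<in> BB n"
    then obtain k j where p: "p = (k,j)" "Suc j * Suc k * Suc k = Suc n" by (auto simp: BB_def)
    have "Suc k \<le> Suc j * Suc k * Suc k" "Suc j \<le> Suc j * Suc k * Suc k" by simp_all
    then show "p \<in> {..n} \<times> {..n}" using p by simp
  qed
  then show ?thesis by (rule finite_subset) simp
qed

lemma ideals_eq:
  "{I. ideal I RR \<and> card (carrier (RR Quot I)) = Suc n}
     = (\<lambda>((k,j),t). LL (Suc k) (Suc j) t) ` Sigma (BB n) (\<lambda>(k,j). {..<Suc k})"
proof (intro equalityI subsetI)
  fix I assume "I \<in> {I. ideal I RR \<and> card (carrier (RR Quot I)) = Suc n}"
  then have I: "ideal I RR" and c: "card (carrier (RR Quot I)) = Suc n" by auto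
  have "finite (carrier (RR Quot I))" using c card.infinite by fastforce
  then obtain k j t where kjt: "k > 0" "j > 0" "t < k" "I = LL k j t" using ideal_is_LL[OF I] by blast
  have jkk: "j * k * k = Suc n" using LL_card[OF kjt(1,2), of t] c kjt(4) by simp
  have e1: "Suc (k - 1) = k" and e2: "Suc (j - 1) = j" using kjt by simp_all
  have "Suc (j - 1) * Suc (k - 1) * Suc (k - 1) = Suc n" unfolding e1 e2 by (rule jkk)
  then have "(k - 1, j - 1) \<in> BB n" by (simp only: BB_def mem_Collect_eq case_prod_conv)
  moreover have "t \<in> {..<Suc (k - 1)}" using kjt by simp
  moreover have "I = LL (Suc (k - 1)) (Suc (j - 1)) t" using kjt by simp
  ultimately show "I \<in> (\<lambda>((k,j),t). LL (Suc k) (Suc j) t) ` Sigma (BB n) (\<lambda>(k,j). {..<Suc k})"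
    by (intro image_eqI[where x="((k-1, j-1), t)"]) auto
next
  fix I assume "I \<in> (\<lambda>((k,j),t). LL (Suc k) (Suc j) t) ` Sigma (BB n) (\<lambda>(k,j). {..<Suc k})"
  then obtain k j t where kjt: "(k,j) \<in> BB n" "I = LL (Suc k) (Suc j) t" by auto
  have "ideal I RR" using LL_ideal[of "Suc k" "Suc j" t] kjt by simp
  moreover have "card (carrier (RR Quot I)) = Suc n"
    using LL_card[of "Suc k" "Suc j" t] kjt by (simp add: BB_def)
  ultimately show "I \<in> {I. ideal I RR \<and> card (carrier (RR Quot I)) = Suc n}" by simp
qed

lemma count_ideals:
  "finite {I. ideal I RR \<and> card (carrier (RR Quot I)) = Suc n}"
  "num_ideals_of_index RR (Suc n) = (\<Sum>p\<in>BB n. Suc (fst p))"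
proof -
  have fS: "finite (Sigma (BB n) (\<lambda>(k,j). {..<Suc k}))" by (intro finite_SigmaI finite_BB) auto
  show "finite {I. ideal I RR \<and> card (carrier (RR Quot I)) = Suc n}"
    unfolding ideals_eq using fS by simp
  have inj: "inj_on (\<lambda>((k,j),t). LL (Suc k) (Suc j) t) (Sigma (BB n) (\<lambda>(k,j). {..<Suc k}))"
  proof (rule inj_onI)
    fix x y assume x: "x \<in> Sigma (BB n) (\<lambda>(k,j). {..<Suc k})" and y: "y \<in> Sigma (BB n) (\<lambda>(k,j). {..<Suc k})"
      and e: "(\<lambda>((k,j),t). LL (Suc k) (Suc j) t) x = (\<lambda>((k,j),t). LL (Suc k) (Suc j) t) y"
    obtain k j t k' j' t' where xy: "x = ((k,j),t)" "y = ((k',j'),t')" by (metis prod.collapse)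
    have "Suc k = Suc k' \<and> Suc j = Suc j' \<and> t = t'"
      by (rule LL_inj) (use x y e xy in auto)
    then show "x = y" using xy by simp
  qed
  have "num_ideals_of_index RR (Suc n) = card (Sigma (BB n) (\<lambda>(k,j). {..<Suc k}))"
    unfolding num_ideals_of_index_def ideals_eq using card_image[OF inj] by simp
  also have "\<dots> = (\<Sum>p\<in>BB n. card ((\<lambda>(k,j). {..<Suc k}) p))"
    by (rule card_SigmaI) (auto simp: finite_BB)
  also have "\<dots> = (\<Sum>p\<in>BB n. Suc (fst p))" by (intro sum.cong) auto
  finally show "num_ideals_of_index RR (Suc n) = (\<Sum>p\<in>BB n. Suc (fst p))" .
qed



lemma norm_nat_powr: "norm ((of_nat (Suc n) :: complex) powr s) = real (Suc n) powr Re s"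
  by (subst norm_powr_real_powr) auto

lemma summable_nat_powr: "r > 1 \<Longrightarrow> summable (\<lambda>n. real (Suc n) powr (- r))"
  using summable_real_powr_iff[of "-r"] by (subst summable_Suc_iff) simp

lemma zeta_norm_summable:
  assumes "Re s > 1"
  shows "summable (\<lambda>n. norm (1 / (of_nat (Suc n) :: complex) powr s))"
proof -
  have "norm (1 / (of_nat (Suc n) :: complex) powr s) = real (Suc n) powr (- Re s)" for n
    by (simp only: norm_divide norm_one norm_nat_powr) (simp add: powr_minus divide_inverse)
  then show ?thesis using summable_nat_powr[OF assms] by simp
qed

lemma zeta_sums:
  assumes "Re s > 1"
  shows "(\<lambda>n. 1 / (of_nat (Suc n) :: complex) powr s) sums riemann_zeta s"
  unfolding riemann_zeta_def
  using summable_norm_cancel[OF zeta_norm_summable[OF assms]] by (simp add: summable_sums)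

lemma taylor_step:
  fixes s :: complex
  assumes "N \<ge> 1" and sgt: "Re s > 1"
  shows "norm ((of_real (N+1)) powr (1-s) - of_real N powr (1-s) - (1-s) * of_real N powr (-s))
          \<le> norm (1-s) * norm s * N powr (- Re s - 1)"
proof -
  define S where "S = closed_segment (complex_of_real N) (of_real (N+1))"
  define f where "f i = (if i = 0 then (\<lambda>x::complex. x powr (1-s)) else if i = 1 then (\<lambda>x. (1-s) * x powr (-s))
     else (\<lambda>x. (1-s) * (-s * x powr (-s-1))))" for i :: nat
  have Sre: "x \<in> S \<Longrightarrow> \<exists>u. u \<ge> N \<and> x = of_real u" for x
  proof -
    assume "x \<in> S"
    then obtain u where u: "0 \<le> u" "u \<le> 1" "x = (1 - u) *\<^sub>R of_real N + u *\<^sub>R of_real (N+1)"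
      by (auto simp: S_def closed_segment_def)
    then have "x = of_real (N + u)" by (simp add: scaleR_conv_of_real algebra_simps)
    then show ?thesis using u by (intro exI[of _ "N+u"]) auto
  qed
  have notneg: "x \<in> S \<Longrightarrow> x \<notin> \<real>\<^sub>\<le>\<^sub>0" for x
    using Sre assms by (fastforce simp: nonpos_Reals_def)
  have deriv: "(f i has_field_derivative f (Suc i) x) (at x within S)" if "x \<in> S" "i \<le> 1" for i x
  proof -
    have nn: "x \<notin> \<real>\<^sub>\<le>\<^sub>0" using notneg that by blast
    show ?thesis
    proof (cases "i = 0")
      case True
      have "((\<lambda>z. z powr (1-s)) has_field_derivative ((1-s) * x powr (1 - s - 1))) (at x)"
        by (rule has_field_derivative_powr[OF nn])
      then show ?thesis using True by (simp add: f_def has_field_derivative_at_within)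
    next
      case False
      then have i: "i = 1" using that by simp
      have "((\<lambda>z. z powr (-s)) has_field_derivative ((-s) * x powr (-s - 1))) (at x)"
        by (rule has_field_derivative_powr[OF nn])
      then have "((\<lambda>z. (1-s) * z powr (-s)) has_field_derivative (1-s) * ((-s) * x powr (-s - 1))) (at x)"
        by (rule DERIV_cmult)
      then show ?thesis using i by (simp add: f_def has_field_derivative_at_within)
    qed
  qed
  have B: "norm (f (Suc 1) x) \<le> norm (1-s) * norm s * N powr (- Re s - 1)" if xS: "x \<in> S" for x
  proof -
    obtain u where u: "u \<ge> N" "x = of_real u" using Sre[OF xS] by blast
    have "norm (x powr (-s-1)) = u powr (- Re s - 1)"
      using u assms by (subst norm_powr_real_powr) auto
    also have "\<dots> \<le> N powr (- Re s - 1)"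
      using u assms sgt by (intro powr_mono2') auto
    finally have "norm (x powr (-s-1)) \<le> N powr (- Re s - 1)" .
    then show ?thesis
      by (simp add: f_def norm_mult mult_left_mono mult.assoc)
  qed
  have w: "complex_of_real N \<in> S" and z: "complex_of_real (N+1) \<in> S" by (auto simp: S_def)
  have cS: "convex S" by (simp add: S_def)
  from complex_Taylor[of S 1 f, OF cS deriv B w z]
  show ?thesis by (simp add: f_def diff_diff_eq)
qed

lemma summable_K: "summable (\<lambda>n. real (Suc n) powr (-2))"
  using summable_nat_powr[of 2] by simp

definition KK :: real where "KK = (\<Sum>n. real (Suc n) powr (-2))"

lemma zeta_approx:
  assumes s1: "Re s > 1"
  shows "norm ((s - 1) * riemann_zeta s - 1) \<le> norm (s - 1) * norm s * KK"
proof -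
  define G where "G n = (of_nat (Suc n) :: complex) powr (1 - s)" for n
  have "G \<longlonglongrightarrow> 0" unfolding G_def
    by (rule tendsto_neg_powr_complex_of_nat) (use s1 in \<open>auto intro: filterlim_Suc\<close>)
  from telescope_sums[OF this] have "(\<lambda>n. G (Suc n) - G n) sums (- 1)" by (simp add: G_def)
  then have t: "(\<lambda>n. G n - G (Suc n)) sums 1" using sums_minus by fastforce
  define d where "d n = (s - 1) * (1 / (of_nat (Suc n) :: complex) powr s) - (G n - G (Suc n))" for n
  have ds: "d sums ((s - 1) * riemann_zeta s - 1)"
    unfolding d_def by (intro sums_diff sums_mult zeta_sums s1 t)
  have db: "norm (d n) \<le> norm (s - 1) * norm s * real (Suc n) powr (-2)" for n
  proof -
    have N1: "real (Suc n) \<ge> 1" by simp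
    have e: "d n = ((of_real (real (Suc n) + 1)) powr (1-s) - of_real (real (Suc n)) powr (1-s)
              - (1-s) * of_real (real (Suc n)) powr (-s))"
      by (simp add: d_def G_def powr_minus divide_inverse algebra_simps)
    have "norm (d n) \<le> norm (1-s) * norm s * real (Suc n) powr (- Re s - 1)"
      unfolding e by (rule taylor_step[OF N1 s1])
    also have "\<dots> \<le> norm (1-s) * norm s * real (Suc n) powr (-2)"
      using s1 by (intro mult_left_mono powr_mono) auto
    also have "norm (1 - s) = norm (s - 1)" by (simp add: norm_minus_commute)
    finally show ?thesis .
  qed
  have "norm (suminf d) \<le> (\<Sum>n. norm (s - 1) * norm s * real (Suc n) powr (-2))"
    by (rule norm_suminf_le[OF db]) (intro summable_mult summable_K)
  also have "\<dots> = norm (s - 1) * norm s * KK"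
    unfolding KK_def by (intro suminf_mult summable_K)
  finally show ?thesis using sums_unique[OF ds] by simp
qed



lemma zeta_pole:
  "((\<lambda>s. (s - 1)\<^sup>2 * (riemann_zeta s * riemann_zeta (2 * s - 1))) \<longlongrightarrow> 1/2) (at 1 within {s. Re s > 1})"
proof -
  define F where "F = at (1::complex) within {s. Re s > 1}"
  define A where "A w = (w - 1) * riemann_zeta w" for w
  have ev: "eventually (\<lambda>s. Re s > 1) F"
    unfolding F_def eventually_at_filter by (rule always_eventually) auto
  have 1: "((\<lambda>s. A s - 1) \<longlongrightarrow> 0) F"
  proof (rule Lim_null_comparison)
    show "eventually (\<lambda>s. norm (A s - 1) \<le> norm (s - 1) * norm s * KK) F"
      using ev by eventually_elim (simp add: A_def zeta_approx)
    have "((\<lambda>s. norm (s - 1) * norm s * KK) \<longlongrightarrow> norm ((1::complex) - 1) * norm (1::complex) * KK) F"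
      unfolding F_def by (intro tendsto_intros)
    then show "((\<lambda>s. norm (s - 1) * norm s * KK) \<longlongrightarrow> 0) F" by simp
  qed
  have 2: "((\<lambda>s. A (2 * s - 1) - 1) \<longlongrightarrow> 0) F"
  proof (rule Lim_null_comparison)
    show "eventually (\<lambda>s. norm (A (2 * s - 1) - 1) \<le> norm ((2 * s - 1) - 1) * norm (2 * s - 1) * KK) F"
      using ev by eventually_elim (simp only: A_def, rule zeta_approx, simp)
    have "((\<lambda>s. norm ((2 * s - 1) - 1) * norm (2 * s - 1) * KK) \<longlongrightarrow>
         norm ((2 * (1::complex) - 1) - 1) * norm (2 * (1::complex) - 1) * KK) F"
      unfolding F_def by (intro tendsto_intros)
    then show "((\<lambda>s. norm ((2 * s - 1) - 1) * norm (2 * s - 1) * KK) \<longlongrightarrow> 0) F" by simp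
  qed
  have "((\<lambda>s. 1/2 * A s * A (2 * s - 1)) \<longlongrightarrow> 1/2 * 1 * 1) F"
    by (intro tendsto_mult tendsto_const LIM_zero_cancel[OF 1] LIM_zero_cancel[OF 2])
  moreover have "(\<lambda>s. 1/2 * A s * A (2 * s - 1)) = (\<lambda>s. (s - 1)\<^sup>2 * (riemann_zeta s * riemann_zeta (2 * s - 1)))"
  proof (rule ext)
    fix s :: complex
    have e: "2 * s - 1 - 1 = 2 * (s - 1)" by simp
    show "1/2 * A s * A (2 * s - 1) = (s - 1)\<^sup>2 * (riemann_zeta s * riemann_zeta (2 * s - 1))"
      unfolding A_def e power2_eq_square by (simp only: mult_ac) simp
  qed
  ultimately show ?thesis by (simp add: F_def)
qed



lemma powr_ident:
  fixes s :: complex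
  shows "1 / (of_nat (Suc k)) powr (2 * s - 1) * (1 / (of_nat (Suc j)) powr s)
        = of_nat (Suc k) / (of_nat (Suc j * Suc k * Suc k)) powr s"
proof -
  define x where "x = (of_nat (Suc k) :: complex)"
  define y where "y = (of_nat (Suc j) :: complex)"
  have x0: "x \<noteq> 0" "x powr s \<noteq> 0" and y0: "y powr s \<noteq> 0" by (simp_all add: x_def y_def powr_def del: of_nat_Suc)
  have r: "x \<in> \<real>" "y \<in> \<real>" "0 \<le> Re x" "0 \<le> Re y" by (simp_all add: x_def y_def)
  have 1: "(of_nat (Suc j * Suc k * Suc k) :: complex) powr s = y powr s * x powr s * x powr s"
  proof -
    have "(of_nat (Suc j * Suc k * Suc k) :: complex) = y * x * x" by (simp only: x_def y_def of_nat_mult)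
    moreover have yx: "y*x \<in> \<real>" "0 \<le> Re (y*x)" by (simp_all add: x_def y_def del: of_nat_Suc)
    ultimately show ?thesis using powr_times_real[OF yx(1) r(1) yx(2) r(3)] powr_times_real[OF r(2) r(1) r(4) r(3)]
      by (simp only:)
  qed
  have 2: "x powr (2 * s - 1) = x powr s * x powr s / x"
  proof -
    have "2 * s - 1 = (s + s) - 1" by simp
    then show ?thesis by (simp only: powr_diff powr_add powr_to_1)
  qed
  have alg: "\<And>a b x :: complex. a \<noteq> 0 \<Longrightarrow> b \<noteq> 0 \<Longrightarrow> x \<noteq> 0 \<Longrightarrow> 1 / (a * a / x) * (1 / b) = x / (b * a * a)"
    by (simp add: field_simps)
  show ?thesis unfolding 1 x_def[symmetric] y_def[symmetric] 2
    using alg[OF x0(2) y0 x0(1)] .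
qed

lemma zeta_has_sum:
  assumes "Re s > 1"
  shows "((\<lambda>n. 1 / (of_nat (Suc n) :: complex) powr s) has_sum riemann_zeta s) UNIV"
  by (rule norm_summable_imp_has_sum[OF zeta_norm_summable[OF assms] zeta_sums[OF assms]])

lemma norm_summable_on:
  assumes "Re s > 1"
  shows "(\<lambda>n. norm (1 / (of_nat (Suc n) :: complex) powr s)) summable_on UNIV"
  by (rule norm_summable_imp_summable_on) (use zeta_norm_summable[OF assms] in simp)

lemma dirichlet:
  fixes s :: complex and a :: "nat \<Rightarrow> nat"
  assumes s1: "Re s > 1"
  assumes a: "\<And>n. a (Suc n) = (\<Sum>p\<in>{(k,j). Suc j * Suc k * Suc k = Suc n}. Suc (fst p))"
  shows "(\<lambda>n. of_nat (a (Suc n)) / of_nat (Suc n) powr s) sums (riemann_zeta s * riemann_zeta (2 * s - 1))"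
proof -
  have s2: "Re (2 * s - 1) > 1" using s1 by simp
  define u where "u k = 1 / (of_nat (Suc k) :: complex) powr (2 * s - 1)" for k
  define v where "v j = 1 / (of_nat (Suc j) :: complex) powr s" for j
  define g where "g = (\<lambda>(k,j). u k * v j)"
  have uh: "(u has_sum riemann_zeta (2 * s - 1)) UNIV" unfolding u_def by (rule zeta_has_sum[OF s2])
  have vh: "(v has_sum riemann_zeta s) UNIV" unfolding v_def by (rule zeta_has_sum[OF s1])
  have nus: "(\<lambda>k. norm (u k)) summable_on UNIV" unfolding u_def by (rule norm_summable_on[OF s2])
  have nvs: "(\<lambda>k. norm (v k)) summable_on UNIV" unfolding v_def by (rule norm_summable_on[OF s1])
  define C where "C = (\<Sum>\<^sub>\<infinity>y. norm (v y))"
  have C0: "C \<ge> 0" unfolding C_def by (rule infsum_nonneg) simp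
  have row: "(\<lambda>y. norm (g (x,y))) summable_on UNIV" for x
    unfolding g_def by (simp add: norm_mult summable_on_cmult_right[OF nvs])
  have rowsum: "(\<Sum>\<^sub>\<infinity>y. norm (g (x,y))) = norm (u x) * C" for x
    unfolding g_def C_def by (simp add: norm_mult infsum_cmult_right[OF nvs])
  have col: "(\<lambda>x. norm (\<Sum>\<^sub>\<infinity>y. norm (g (x,y)))) summable_on UNIV"
    unfolding rowsum using C0 by (simp add: norm_mult summable_on_cmult_left[OF nus])
  have "(\<lambda>z. norm (g z)) summable_on Sigma UNIV (\<lambda>_. UNIV)"
    using Infinite_Sum.abs_summable_on_Sigma_iff[where f=g and A=UNIV and B="\<lambda>_. UNIV"] row col by blast
  then have "(\<lambda>z. norm (g z)) summable_on UNIV" by simp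
  then have gs: "g summable_on UNIV" using summable_on_iff_abs_summable_on_complex[of g UNIV] by blast
  have gh: "(g has_sum riemann_zeta (2 * s - 1) * riemann_zeta s) (Sigma UNIV (\<lambda>_. UNIV))"
  proof (rule has_sum_SigmaI)
    show "((\<lambda>y. g (x, y)) has_sum u x * riemann_zeta s) UNIV" for x
      unfolding g_def using has_sum_cmult_right[OF vh] by simp
    show "((\<lambda>x. u x * riemann_zeta s) has_sum riemann_zeta (2 * s - 1) * riemann_zeta s) UNIV"
      by (rule has_sum_cmult_left[OF uh])
    show "g summable_on Sigma UNIV (\<lambda>_. UNIV)" using gs by simp
  qed
  define B where "B n = {(k,j). Suc j * Suc k * Suc k = Suc n}" for n
  have bij: "bij_betw snd (Sigma UNIV B) (Sigma UNIV (\<lambda>_. UNIV))"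
  proof (rule bij_betwI[where g = "\<lambda>(k,j). (Suc j * Suc k * Suc k - 1, (k,j))"])
    show "snd \<in> Sigma UNIV B \<rightarrow> Sigma UNIV (\<lambda>_. UNIV)" by simp
    show "(\<lambda>(k,j). (Suc j * Suc k * Suc k - 1, (k,j))) \<in> Sigma UNIV (\<lambda>_. UNIV) \<rightarrow> Sigma UNIV B"
      by (auto simp: B_def)
    show "\<And>x. x \<in> Sigma UNIV B \<Longrightarrow> (case snd x of (k, j) \<Rightarrow> (Suc j * Suc k * Suc k - 1, k, j)) = x"
      by (auto simp: B_def)
    show "\<And>y. y \<in> Sigma UNIV (\<lambda>_. UNIV) \<Longrightarrow> snd (case y of (k, j) \<Rightarrow> (Suc j * Suc k * Suc k - 1, k, j)) = y"
      by auto
  qed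
  have gh2: "((\<lambda>x. g (snd x)) has_sum riemann_zeta (2 * s - 1) * riemann_zeta s) (Sigma UNIV B)"
    using has_sum_reindex_bij_betw[OF bij] gh by blast
  have finB: "finite (B n)" for n
  proof -
    have "B n \<subseteq> {..n} \<times> {..n}"
    proof
      fix p assume "p \<in> B n"
      then obtain k j where p: "p = (k,j)" "Suc j * Suc k * Suc k = Suc n" by (auto simp: B_def)
      have "Suc k \<le> Suc j * Suc k * Suc k" "Suc j \<le> Suc j * Suc k * Suc k" by simp_all
      then show "p \<in> {..n} \<times> {..n}" using p by simp
    qed
    then show ?thesis by (rule finite_subset) simp
  qed
  have rowB: "((\<lambda>y. g (snd (n, y))) has_sum of_nat (a (Suc n)) / of_nat (Suc n) powr s) (B n)" for n
  proof -
    have "(\<Sum>y\<in>B n. g y) = (\<Sum>y\<in>B n. of_nat (Suc (fst y)) / of_nat (Suc n) powr s)"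
    proof (rule sum.cong)
      fix y assume "y \<in> B n"
      then obtain k j where y: "y = (k,j)" "Suc j * Suc k * Suc k = Suc n" by (auto simp: B_def)
      show "g y = of_nat (Suc (fst y)) / of_nat (Suc n) powr s"
        using powr_ident[of k s j] y by (simp add: g_def u_def v_def del: of_nat_Suc)
    qed simp
    also have "\<dots> = of_nat (a (Suc n)) / of_nat (Suc n) powr s"
      by (simp add: a B_def sum_divide_distrib del: of_nat_Suc)
    finally show ?thesis using has_sum_finite[OF finB[of n], of g] by simp
  qed
  have "((\<lambda>n. of_nat (a (Suc n)) / of_nat (Suc n) powr s) has_sum riemann_zeta (2 * s - 1) * riemann_zeta s) UNIV"
    by (rule has_sum_Sigma'[OF _ rowB]) (use gh2 in \<open>simp add: case_prod_unfold\<close>)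
  then show ?thesis by (simp add: has_sum_imp_sums mult.commute)
qed


theorem mainTheorem10:
  shows "(\<forall>n::nat. n \<ge> 1 \<longrightarrow>
            finite {I. ideal I ZX_mod_X2 \<and> card (carrier (ZX_mod_X2 Quot I)) = n})
       \<and> (\<forall>s::complex. Re s > 1 \<longrightarrow>
            (\<lambda>n. of_nat (num_ideals_of_index ZX_mod_X2 (Suc n)) / (of_nat (Suc n)) powr s)
              sums (riemann_zeta s * riemann_zeta (2 * s - 1)))
       \<and> (\<exists>c::complex. c \<noteq> 0 \<and>
            ((\<lambda>s. (s - 1)\<^sup>2 * (riemann_zeta s * riemann_zeta (2 * s - 1)))
               \<longlongrightarrow> c) (at 1 within {s. Re s > 1}))"
proof (intro conjI allI impI)
  fix n :: nat assume "n \<ge> 1"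
  then obtain m where "n = Suc m" by (cases n) auto
  then show "finite {I. ideal I ZX_mod_X2 \<and> card (carrier (ZX_mod_X2 Quot I)) = n}"
    using count_ideals(1)[of m] by simp
next
  fix s :: complex assume "Re s > 1"
  then show "(\<lambda>n. of_nat (num_ideals_of_index ZX_mod_X2 (Suc n)) / (of_nat (Suc n)) powr s)
              sums (riemann_zeta s * riemann_zeta (2 * s - 1))"
    by (rule dirichlet) (simp add: count_ideals(2) BB_def)
next
  show "\<exists>c::complex. c \<noteq> 0 \<and>
            ((\<lambda>s. (s - 1)\<^sup>2 * (riemann_zeta s * riemann_zeta (2 * s - 1)))
               \<longlongrightarrow> c) (at 1 within {s. Re s > 1})"
    using zeta_pole by (intro exI[of _ "1/2"]) simp
qed

end
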